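(* Let $A\in P(n)$. Then there exists $x\in\mathbb C^n$ with $\|x\|=1$ such that $I(2,A)=\|A\circ xx^*\|_2$; that is, $I(2,A)=\min\{\|A\circ xx^*\|_2: \|x\|=1\}$.
   Context: $P(n)$ denotes positive semidefinite complex $n\times n$ matrices, $\circ$ the Hadamard (entrywise) product, and $\|\cdot\|_2$ the Frobenius norm. $I(2,A)=\min\{\|A\circ B\|_2: B\in P(n),\ \|B\|_2=1\}$. *)

theory Defs
  imports "HOL-Analysis.Analysis"
begin

text \<open>Complex n x n matrices are rendered as complex^'n^'n, with n the (finite) cardinality of 'n.\<close>

definition hermitian_mat :: "complex^'n^'n \<Rightarrow> bool" where
  "hermitian_mat A \<longleftrightarrow> (\<forall>i j. A $ j $ i = cnj (A $ i $ j))"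

definition psd :: "complex^'n^'n \<Rightarrow> bool" where
  "psd A \<longleftrightarrow> hermitian_mat A \<and>
     (\<forall>x::complex^'n. 0 \<le> Re (\<Sum>i\<in>UNIV. \<Sum>j\<in>UNIV. cnj (x $ i) * A $ i $ j * x $ j))"

definition hadamard :: "complex^'n^'n \<Rightarrow> complex^'n^'n \<Rightarrow> complex^'n^'n" (infixl "\<circ>\<^sub>H" 70) where
  "A \<circ>\<^sub>H B = (\<chi> i j. A $ i $ j * B $ i $ j)"

definition frob_norm :: "complex^'n^'n \<Rightarrow> real" where
  "frob_norm A = sqrt (\<Sum>i\<in>UNIV. \<Sum>j\<in>UNIV. (cmod (A $ i $ j))\<^sup>2)"

definition outer :: "complex^'n \<Rightarrow> complex^'n^'n" where
  "outer x = (\<chi> i j. x $ i * cnj (x $ j))"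

text \<open>I(2,A) = min { ||A o B||_2 : B in P(n), ||B||_2 = 1 } (rendered as Inf; the minimum is attained).\<close>
definition I2 :: "complex^'n^'n \<Rightarrow> real" where
  "I2 A = Inf {frob_norm (A \<circ>\<^sub>H B) | B. psd B \<and> frob_norm B = 1}"

end

theory Submission imports Defs begin

definition sf :: "complex^'n^'n \<Rightarrow> complex^'n \<Rightarrow> complex^'n \<Rightarrow> complex" where
  "sf M x y = (\<Sum>i\<in>UNIV. \<Sum>j\<in>UNIV. cnj (x $ i) * M $ i $ j * y $ j)"
definition ip :: "complex^'n \<Rightarrow> complex^'n \<Rightarrow> complex" where
  "ip x y = (\<Sum>i\<in>UNIV. cnj (x $ i) * y $ i)"
definition nsq :: "complex^'n \<Rightarrow> real" where
  "nsq x = (\<Sum>i\<in>UNIV. (cmod (x $ i))\<^sup>2)"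

lemma psd_sf: "psd A \<longleftrightarrow> hermitian_mat A \<and> (\<forall>x. 0 \<le> Re (sf A x x))"
  by (simp add: psd_def sf_def)

lemma sf_ip: "sf M x y = ip x (M *v y)"
  by (simp add: sf_def ip_def matrix_vector_mult_def sum_distrib_left mult.assoc)

lemma ip_self: "ip x x = of_real (nsq x)"
  by (simp add: ip_def nsq_def of_real_sum complex_norm_square mult.commute del: of_real_power)

lemma norm_nsq: "(norm x)\<^sup>2 = nsq x"
  by (simp add: norm_vec_def L2_set_def nsq_def sum_nonneg)

lemma nsq_nonneg: "0 \<le> nsq x"
  by (simp add: nsq_def sum_nonneg)

lemma nsq_zero: "nsq x = 0 \<longleftrightarrow> x = 0"
  by (simp add: nsq_def sum_nonneg_eq_0_iff vec_eq_iff)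

lemma herm_sf: "hermitian_mat M \<Longrightarrow> sf M y x = cnj (sf M x y)"
proof -
  assume h: "hermitian_mat M"
  have "cnj (sf M x y) = (\<Sum>i\<in>UNIV. \<Sum>j\<in>UNIV. x $ i * cnj (M $ i $ j) * cnj (y $ j))"
    unfolding sf_def by (simp only: cnj_sum complex_cnj_mult complex_cnj_cnj)
  also have "\<dots> = (\<Sum>i\<in>UNIV. \<Sum>j\<in>UNIV. cnj (y $ j) * M $ j $ i * x $ i)"
  proof -
    have c: "\<And>i j. cnj (M $ i $ j) = M $ j $ i"
      using h unfolding hermitian_mat_def by (metis complex_cnj_cnj)
    show ?thesis by (simp only: c mult.commute mult.left_commute)
  qed
  also have "\<dots> = sf M y x"
    unfolding sf_def by (rule sum.swap)
  finally show ?thesis by simp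
qed
lemma sf_add_left: "sf M (x + y) z = sf M x z + sf M y z"
  by (simp add: sf_def distrib_left distrib_right sum.distrib)
lemma sf_add_right: "sf M z (x + y) = sf M z x + sf M z y"
  by (simp add: sf_def distrib_left distrib_right sum.distrib)
lemma sf_scale_left: "sf M (c *s x) z = cnj c * sf M x z"
  by (simp add: sf_def sum_distrib_left mult.assoc)
lemma sf_scale_right: "sf M z (c *s x) = c * sf M z x"
  by (simp add: sf_def sum_distrib_left mult.assoc mult.left_commute)

lemma kernel_lemma:
  assumes h: "hermitian_mat M" and pos: "\<forall>z. 0 \<le> Re (sf M z z)" and x0: "Re (sf M x x) = 0"
  shows "M *v x = 0"
proof -
  define y where "y = M *v x"
  define r where "r = nsq y"
  define q where "q = Re (sf M y y)"
  have q0: "0 \<le> q" using pos q_def by auto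
  have yx: "sf M y x = of_real r" unfolding r_def y_def by (simp add: sf_ip ip_self)
  have xy: "sf M x y = of_real r" using herm_sf[OF h, of x y] yx by simp
  have key: "0 \<le> 2 * t * r + t^2 * q" for t :: real
  proof -
    have "sf M (x + of_real t *s y) (x + of_real t *s y)
      = sf M x x + of_real t * sf M x y + of_real t * sf M y x + of_real t * of_real t * sf M y y"
      by (simp add: sf_add_left sf_add_right sf_scale_left sf_scale_right algebra_simps)
    then have "Re (sf M (x + of_real t *s y) (x + of_real t *s y)) = 2 * t * r + t^2 * q"
      using x0 xy yx q_def by (simp add: power2_eq_square)
    then show ?thesis using pos by metis
  qed
  have "r = 0"
  proof (rule ccontr)
    assume rn: "r \<noteq> 0"
    define t where "t = - r / (q + 1)"
    have "0 \<le> 2 * t * r + t^2 * q" by (rule key)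
    then have "0 \<le> (2 * t * r + t^2 * q) * (q+1)^2" using q0 by simp
    also have "(2 * t * r + t^2 * q) * (q+1)^2 = - (r^2 * (q + 2))"
    proof -
      have qn: "q + 1 \<noteq> 0" using q0 by simp
      have e1: "t * (q + 1) = - r" unfolding t_def using qn by simp
      have "(2 * t * r + t^2 * q) * (q+1)^2 = 2 * r * (t * (q+1)) * (q+1) + (t * (q+1))^2 * q"
        by (simp add: power2_eq_square algebra_simps)
      also have "\<dots> = - (r^2 * (q + 2))" unfolding e1 by (simp add: power2_eq_square algebra_simps)
      finally show ?thesis .
    qed
    finally have "0 \<le> - (r^2 * (q + 2))" .
    moreover have "0 < r^2 * (q+2)" using rn q0 by simp
    ultimately show False by simp
  qed
  then show ?thesis unfolding r_def y_def by (simp add: nsq_zero)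
qed


lemma ip_cnj: "cnj (ip x y) = ip y x"
  by (simp add: ip_def mult.commute)
lemma ip_add_right: "ip x (y + z) = ip x y + ip x z"
  by (simp add: ip_def distrib_left sum.distrib)
lemma ip_diff_right: "ip x (y - z) = ip x y - ip x z"
  by (simp add: ip_def right_diff_distrib sum_subtractf)
lemma ip_scale_right: "ip x (c *s y) = c * ip x y"
  by (simp add: ip_def sum_distrib_left mult.left_commute)
lemma ip_scale_left: "ip (c *s x) y = cnj c * ip x y"
  by (simp add: ip_def sum_distrib_left mult.assoc)
lemma ip_zero_right[simp]: "ip x 0 = 0"
  by (simp add: ip_def)
lemma ip_zero_left[simp]: "ip 0 x = 0"
  by (simp add: ip_def)
lemma ip_sum_right: "ip x (\<Sum>u\<in>S. f u) = (\<Sum>u\<in>S. ip x (f u))"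
  unfolding ip_def by (simp add: sum_distrib_left) (rule sum.swap)
lemma nsq_scale: "nsq (c *s x) = (cmod c)\<^sup>2 * nsq x"
  by (simp add: nsq_def norm_mult power_mult_distrib sum_distrib_left)
lemma sf_zero_left[simp]: "sf M 0 z = 0" by (simp add: sf_def)
lemma sf_zero_right[simp]: "sf M z 0 = 0" by (simp add: sf_def)
lemma sf_mdiff: "sf (M - N) x y = sf M x y - sf N x y"
  by (simp add: sf_def algebra_simps sum_subtractf)
lemma sf_madd: "sf (M + N) x y = sf M x y + sf N x y"
  by (simp add: sf_def algebra_simps sum.distrib)
lemma sf_mzero[simp]: "sf 0 x y = 0" by (simp add: sf_def)
lemma sf_msum: "sf (\<Sum>k<(K::nat). M k) x y = (\<Sum>k<K. sf (M k) x y)"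
  by (induction K) (simp_all add: sf_madd)
lemma outer_mv: "outer x *v w = ip x w *s x"
  by (simp add: outer_def ip_def matrix_vector_mult_def vec_eq_iff sum_distrib_left mult.commute mult.left_commute)
lemma sf_outer: "sf (outer x) z w = ip z x * ip x w"
  by (simp add: sf_ip outer_mv ip_scale_right mult.commute)
lemma herm_outer: "hermitian_mat (outer x)"
  by (simp add: hermitian_mat_def outer_def mult.commute)
lemma herm_diff: "hermitian_mat M \<Longrightarrow> hermitian_mat N \<Longrightarrow> hermitian_mat (M - N)"
  unfolding hermitian_mat_def by (metis complex_cnj_diff vector_minus_component)
lemma herm_add: "hermitian_mat M \<Longrightarrow> hermitian_mat N \<Longrightarrow> hermitian_mat (M + N)"
  unfolding hermitian_mat_def by (metis complex_cnj_add vector_add_component)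
lemma sf_outer_self: "sf (outer x) z z = of_real ((cmod (ip z x))\<^sup>2)"
  by (simp add: sf_outer flip: ip_cnj[of z x] complex_norm_square)
lemma psd_outer: "psd (outer x)"
  by (simp add: psd_sf herm_outer sf_outer_self)

lemma norm1_nsq: "norm x = 1 \<longleftrightarrow> nsq x = 1"
  using norm_nsq[of x] power2_eq_iff_nonneg[of "norm x" 1] by simp

lemma exists_max:
  fixes B :: "complex^'n^'n"
  shows "\<exists>x. nsq x = 1 \<and> (\<forall>y. nsq y = 1 \<longrightarrow> Re (sf B y y) \<le> Re (sf B x x))"
proof -
  have ne: "sphere (0::complex^'n) 1 \<noteq> {}" by simp
  have cont: "continuous_on UNIV (\<lambda>x::complex^'n. Re (sf B x x))"
    unfolding sf_def by (intro continuous_intros)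
  obtain x where x: "x \<in> sphere 0 1" and m: "\<forall>y\<in>sphere 0 1. Re (sf B y y) \<le> Re (sf B x x)"
    using continuous_attains_sup[OF compact_sphere ne continuous_on_subset[OF cont]] by blast
  have "nsq x = 1" using x by (simp add: norm1_nsq)
  moreover have "\<forall>y. nsq y = 1 \<longrightarrow> Re (sf B y y) \<le> Re (sf B x x)"
  proof (intro allI impI)
    fix y :: "complex^'n" assume "nsq y = 1"
    then have "y \<in> sphere 0 1" by (simp add: norm1_nsq)
    then show "Re (sf B y y) \<le> Re (sf B x x)" using m by blast
  qed
  ultimately show ?thesis by blast
qed

lemma eig:
  assumes "psd B" "B \<noteq> 0"
  shows "\<exists>x l. nsq x = 1 \<and> l > 0 \<and> B *v x = of_real l *s x"
proof -
  have h: "hermitian_mat B" and p: "\<forall>z. 0 \<le> Re (sf B z z)" using assms(1) psd_sf by auto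
  obtain x where x1: "nsq x = 1" and mx: "\<forall>y. nsq y = 1 \<longrightarrow> Re (sf B y y) \<le> Re (sf B x x)"
    using exists_max by blast
  define l where "l = Re (sf B x x)"
  have bound: "Re (sf B z z) \<le> l * nsq z" for z
  proof (cases "z = 0")
    case True then show ?thesis by (simp add: nsq_def)
  next
    case False
    define c where "c = norm z"
    have c0: "c > 0" using False c_def by simp
    have nz: "nsq z = c^2" using norm_nsq c_def by metis
    define u where "u = of_real (1/c) *s z"
    have "nsq u = (1/c)^2 * c^2" unfolding u_def nsq_scale nz using c0 by (simp add: norm_divide)
    then have u1: "nsq u = 1" using c0 by (simp add: power_divide)
    have zu: "z = of_real c *s u" unfolding u_def using c0 by (simp add: vec_eq_iff)
    have "sf B z z = of_real (c^2) * sf B u u"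
      unfolding zu sf_scale_left sf_scale_right by (simp add: power2_eq_square)
    then have "Re (sf B z z) = c^2 * Re (sf B u u)" by simp
    also have "\<dots> \<le> c^2 * l" using mx u1 l_def by (simp add: mult_left_mono)
    finally show ?thesis using nz by (simp add: mult.commute)
  qed
  define M where "M = (\<chi> i j. (if i = j then of_real l else 0) - B $ i $ j)"
  have Mv: "M *v v = of_real l *s v - B *v v" for v
  proof -
    have "(\<Sum>j\<in>UNIV. ((if i = j then of_real l else 0) - B $ i $ j) * v $ j)
        = of_real l * v $ i - (\<Sum>j\<in>UNIV. B $ i $ j * v $ j)" for i
    proof -
      have "((if i = j then of_real l else 0) - B $ i $ j) * v $ j
          = (if i = j then of_real l * v $ j else 0) - B $ i $ j * v $ j" for j
        by (simp add: left_diff_distrib)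
      then show ?thesis by (simp add: sum_subtractf)
    qed
    then show ?thesis by (simp add: M_def matrix_vector_mult_def vec_eq_iff)
  qed
  have hM: "hermitian_mat M"
    unfolding hermitian_mat_def
  proof (intro allI)
    fix i j
    have e: "B $ j $ i = cnj (B $ i $ j)" using h unfolding hermitian_mat_def by blast
    show "M $ j $ i = cnj (M $ i $ j)" unfolding M_def by (simp add: e)
  qed
  have sfM: "sf M z w = of_real l * ip z w - sf B z w" for z w
    by (simp add: sf_ip Mv ip_diff_right ip_scale_right)
  have pM: "\<forall>z. 0 \<le> Re (sf M z z)"
    using bound by (simp add: sfM ip_self)
  have "Re (sf M x x) = 0" using x1 l_def by (simp add: sfM ip_self)
  then have "M *v x = 0" using kernel_lemma[OF hM pM] by blast
  then have Bx: "B *v x = of_real l *s x" using Mv by simp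
  have l0: "l \<ge> 0" using p l_def by auto
  have "l \<noteq> 0"
  proof
    assume "l = 0"
    then have z: "\<forall>z. Re (sf B z z) = 0" using bound p by (metis mult_zero_left order_antisym)
    have "B *v z = 0 *v z" for z using kernel_lemma[OF h p] z by simp
    then have "B = 0" using matrix_eq by blast
    then show False using assms(2) by simp
  qed
  then have "l > 0" using l0 by simp
  then show ?thesis using x1 Bx by blast
qed

lemma deflate:
  assumes "psd B" "y \<noteq> 0" "B *v y = of_real (nsq y) *s y"
  shows "psd (B - outer y)" "(B - outer y) *v y = 0"
    "\<And>s. B *v s = 0 \<Longrightarrow> ip s y = 0 \<and> (B - outer y) *v s = 0"
proof -
  have h: "hermitian_mat B" and p: "\<forall>z. 0 \<le> Re (sf B z z)" using assms(1) psd_sf by auto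
  have hB': "hermitian_mat (B - outer y)" using h herm_outer herm_diff by blast
  have ny: "nsq y \<noteq> 0" using assms(2) nsq_zero by blast
  show By: "(B - outer y) *v y = 0"
    by (simp add: matrix_vector_mult_diff_rdistrib assms(3) outer_mv ip_self)
  have "0 \<le> Re (sf (B - outer y) z z)" for z
  proof -
    define a where "a = ip y z / of_real (nsq y)"
    define w where "w = z - a *s y"
    have yw: "ip y w = 0" unfolding w_def a_def using ny by (simp add: ip_diff_right ip_scale_right ip_self)
    have z: "z = w + a *s y" unfolding w_def by simp
    have r1: "sf (B - outer y) v y = 0" for v by (simp add: sf_ip By)
    have r2: "sf (B - outer y) y v = 0" for v using herm_sf[OF hB', of v y] r1[of v] by simp
    have "sf (B - outer y) z z = sf (B - outer y) w w"
      unfolding z by (simp add: sf_add_left sf_add_right sf_scale_left sf_scale_right r1 r2)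
    also have "\<dots> = sf B w w" by (simp add: sf_mdiff sf_outer yw)
    finally show ?thesis using p by simp
  qed
  then show "psd (B - outer y)" using hB' psd_sf by blast
  fix s assume Bs: "B *v s = 0"
  have "of_real (nsq y) * ip s y = sf B s y" by (simp add: sf_ip assms(3) ip_scale_right)
  also have "\<dots> = cnj (sf B y s)" by (rule herm_sf[OF h])
  also have "\<dots> = 0" by (simp add: sf_ip Bs)
  finally have sy: "ip s y = 0" using ny by simp
  then have "ip y s = 0" using ip_cnj[of s y] by simp
  then show "ip s y = 0 \<and> (B - outer y) *v s = 0" using sy
    by (simp add: matrix_vector_mult_diff_rdistrib Bs outer_mv)
qed


definition orth :: "(complex^'n) set \<Rightarrow> bool" where
  "orth S \<longleftrightarrow> (\<forall>s\<in>S. s \<noteq> 0) \<and> (\<forall>s\<in>S. \<forall>t\<in>S. s \<noteq> t \<longrightarrow> ip s t = 0)"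

lemma orth_card:
  fixes S :: "(complex^'n) set"
  assumes "finite S" "orth S"
  shows "card S \<le> CARD('n)"
proof -
  have "vec.independent S"
    unfolding vec.independent_explicit
  proof (intro conjI allI impI ballI)
    show "finite S" by fact
    fix c v assume sum0: "(\<Sum>v\<in>S. c v *s v) = 0" and v: "v \<in> S"
    have "0 = ip v (\<Sum>u\<in>S. c u *s u)" using sum0 by simp
    also have "\<dots> = (\<Sum>u\<in>S. c u * ip v u)" by (simp add: ip_sum_right ip_scale_right)
    also have "\<dots> = c v * ip v v + (\<Sum>u\<in>S - {v}. c u * ip v u)"
      using assms(1) v by (simp add: sum.remove)
    also have "(\<Sum>u\<in>S - {v}. c u * ip v u) = 0"
      using assms(2) v unfolding orth_def by (intro sum.neutral) auto
    finally have "c v * of_real (nsq v) = 0" by (simp add: ip_self)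
    moreover have "nsq v \<noteq> 0" using assms(2) v nsq_zero unfolding orth_def by blast
    ultimately show "c v = 0" by simp
  qed
  then have "card S \<le> vec.dim (UNIV :: (complex^'n) set)"
    using vec.independent_card_le_dim by blast
  then show ?thesis by (simp add: card_cart_basis)
qed

lemma spectral_ind:
  fixes d :: nat
  shows "\<forall>(B::complex^'n^'n) S. psd B \<longrightarrow> finite S \<longrightarrow> orth S \<longrightarrow> (\<forall>s\<in>S. B *v s = 0)
     \<longrightarrow> CARD('n) - card S \<le> d
     \<longrightarrow> (\<exists>(K::nat) w. B = (\<Sum>k<K. outer (w k)) \<and> (\<forall>k<K. \<forall>l<K. k \<noteq> l \<longrightarrow> ip (w k) (w l) = 0))"
proof (induction d)
  have step: "\<exists>y. y \<noteq> 0 \<and> psd (B - outer y) \<and> (B - outer y) *v y = 0 \<and>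
      orth (insert y S) \<and> card (insert y S) = Suc (card S) \<and> card (insert y S) \<le> CARD('n) \<and>
      (\<forall>s\<in>insert y S. (B - outer y) *v s = 0)"
    if B: "psd B" "B \<noteq> 0" and S: "finite S" "orth S" "\<forall>s\<in>S. B *v s = 0"
    for B :: "complex^'n^'n" and S
  proof -
    obtain x l where x: "nsq x = 1" "l > 0" "B *v x = of_real l *s x" using eig[OF B] by blast
    define y where "y = of_real (sqrt l) *s x"
    have ny: "nsq y = l" unfolding y_def nsq_scale x(1) using x(2) by simp
    have y0: "y \<noteq> 0"
    proof
      assume "y = 0" then have "nsq y = 0" using nsq_zero by blast
      then show False using ny x(2) by simp
    qed
    have By: "B *v y = of_real (nsq y) *s y"
    proof -
      have "B *v y = of_real (sqrt l) *s (B *v x)" unfolding y_def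
        by (simp add: vec_eq_iff matrix_vector_mult_def sum_distrib_left mult.left_commute)
      also have "\<dots> = of_real (sqrt l) *s (of_real l *s x)" using x(3) by simp
      also have "\<dots> = of_real l *s y" by (simp add: y_def vec_eq_iff mult.left_commute)
      finally show ?thesis using ny by simp
    qed
    note D = deflate[OF B(1) y0 By]
    have sy: "\<forall>s\<in>S. ip s y = 0" using D(3) S(3) by blast
    have yS: "y \<notin> S"
    proof
      assume "y \<in> S"
      then have "ip y y = 0" using sy by blast
      then show False using ny x(2) by (simp add: ip_self)
    qed
    have o: "orth (insert y S)"
      using S(2) y0 sy ip_cnj unfolding orth_def by (metis complex_cnj_zero insert_iff)
    have c: "card (insert y S) = Suc (card S)" using S(1) yS by simp
    have k: "\<forall>s\<in>insert y S. (B - outer y) *v s = 0" using D(2) D(3) S(3) by blast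
    have cb: "card (insert y S) \<le> CARD('n)" using orth_card[OF _ o] S(1) by simp
    show ?thesis using y0 D(1) D(2) o c cb k by blast
  qed
  {
    case 0
    show ?case
    proof (intro allI impI)
      fix B :: "complex^'n^'n" and S
      assume a: "psd B" "finite S" "orth S" "\<forall>s\<in>S. B *v s = 0" "CARD('n) - card S \<le> 0"
      have "B = 0"
      proof (rule ccontr)
        assume "B \<noteq> 0"
        then obtain y where "card (insert y S) = Suc (card S)" "card (insert y S) \<le> CARD('n)"
          using step a by blast
        then show False using a(5) by simp
      qed
      then show "\<exists>(K::nat) w. B = (\<Sum>k<K. outer (w k)) \<and> (\<forall>k<K. \<forall>l<K. k \<noteq> l \<longrightarrow> ip (w k) (w l) = 0)"
        by (intro exI[of _ "0::nat"]) simp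
    qed
  next
    case (Suc d)
    show ?case
    proof (intro allI impI)
      fix B :: "complex^'n^'n" and S
      assume a: "psd B" "finite S" "orth S" "\<forall>s\<in>S. B *v s = 0" "CARD('n) - card S \<le> Suc d"
      show "\<exists>(K::nat) w. B = (\<Sum>k<K. outer (w k)) \<and> (\<forall>k<K. \<forall>l<K. k \<noteq> l \<longrightarrow> ip (w k) (w l) = 0)"
      proof (cases "B = 0")
        case True
        then show ?thesis by (intro exI[of _ "0::nat"]) simp
      next
        case False
        then obtain y where y: "y \<noteq> 0" "psd (B - outer y)" "(B - outer y) *v y = 0"
          "orth (insert y S)" "card (insert y S) = Suc (card S)"
          "\<forall>s\<in>insert y S. (B - outer y) *v s = 0"
          using step a by blast
        have cd: "CARD('n) - card (insert y S) \<le> d" using y(5) a(5) by simp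
        have fi: "finite (insert y S)" using a(2) by simp
        obtain K :: nat and w where Kw: "B - outer y = (\<Sum>k<K. outer (w k))"
          "\<forall>k<K. \<forall>l<K. k \<noteq> l \<longrightarrow> ip (w k) (w l) = 0"
          using Suc.IH[rule_format, OF y(2) fi y(4) _ cd] y(6) by blast
        have "sf (B - outer y) y y = 0" by (simp add: sf_ip y(3))
        then have "(\<Sum>k<K. of_real ((cmod (ip y (w k)))\<^sup>2)) = (0::complex)"
          unfolding Kw sf_msum sf_outer_self .
        then have "(\<Sum>k<K. (cmod (ip y (w k)))\<^sup>2) = 0"
          unfolding of_real_sum[symmetric] of_real_eq_0_iff .
        then have orthy: "\<forall>k<K. ip y (w k) = 0"
          by (simp add: sum_nonneg_eq_0_iff)
        define w' where "w' = w(K := y)"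
        have "B = (\<Sum>k<K. outer (w k)) + outer y" using Kw(1) by (simp add: algebra_simps)
        also have "\<dots> = (\<Sum>k<Suc K. outer (w' k))" by (simp add: w'_def)
        finally have e: "B = (\<Sum>k<Suc K. outer (w' k))" .
        have "\<forall>k<Suc K. \<forall>l<Suc K. k \<noteq> l \<longrightarrow> ip (w' k) (w' l) = 0"
        proof (intro allI impI)
          fix k l assume kl: "k < Suc K" "l < Suc K" "k \<noteq> l"
          show "ip (w' k) (w' l) = 0"
          proof (cases "k = K")
            case True
            then show ?thesis using kl orthy by (simp add: w'_def)
          next
            case False
            note kK = False
            show ?thesis
            proof (cases "l = K")
              case True
              then have "ip (w' k) (w' l) = cnj (ip y (w k))" using kK by (simp add: w'_def ip_cnj)
              then show ?thesis using orthy kl kK by simp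
            next
              case False
              then show ?thesis using kK kl Kw(2) by (simp add: w'_def)
            qed
          qed
        qed
        then show ?thesis using e by blast
      qed
    qed
  }
qed

lemma spectral:
  fixes B :: "complex^'n^'n"
  assumes "psd B"
  shows "\<exists>(K::nat) w. B = (\<Sum>k<K. outer (w k)) \<and> (\<forall>k<K. \<forall>l<K. k \<noteq> l \<longrightarrow> ip (w k) (w l) = 0)"
  using spectral_ind[of "CARD('n)", rule_format, of B "{}"] assms by (simp add: orth_def)


definition zz :: "(nat \<Rightarrow> complex^'n) \<Rightarrow> nat \<Rightarrow> nat \<Rightarrow> complex^'n" where
  "zz w k l = (\<chi> i. w k $ i * cnj (w l $ i))"

definition Q :: "complex^'n^'n \<Rightarrow> complex^'n \<Rightarrow> complex" where
  "Q A z = (\<Sum>i\<in>UNIV. \<Sum>j\<in>UNIV. of_real ((cmod (A $ i $ j))\<^sup>2) * (z $ i * cnj (z $ j)))"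

lemma ptwise:
  assumes "B = (\<Sum>k<(K::nat). outer (w k))"
  shows "of_real ((cmod (B $ i $ j))\<^sup>2) = (\<Sum>k<K. \<Sum>l<K. zz w k l $ i * cnj (zz w k l $ j))"
proof -
  have b: "B $ i $ j = (\<Sum>k<K. w k $ i * cnj (w k $ j))" using assms by (simp add: outer_def)
  have "of_real ((cmod (B $ i $ j))\<^sup>2) = B $ i $ j * cnj (B $ i $ j)" by (rule complex_norm_square)
  also have "\<dots> = (\<Sum>k<K. w k $ i * cnj (w k $ j)) * (\<Sum>l<K. cnj (w l $ i) * w l $ j)"
    unfolding b cnj_sum by simp
  also have "\<dots> = (\<Sum>k<K. \<Sum>l<K. (w k $ i * cnj (w k $ j)) * (cnj (w l $ i) * w l $ j))"
    by (rule sum_product)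
  also have "\<dots> = (\<Sum>k<K. \<Sum>l<K. zz w k l $ i * cnj (zz w k l $ j))"
    by (simp add: zz_def mult_ac)
  finally show ?thesis .
qed

lemma sw3: "(\<Sum>j\<in>B. \<Sum>k\<in>C. \<Sum>l\<in>D. g j k l) = (\<Sum>k\<in>C. \<Sum>l\<in>D. \<Sum>j\<in>B. g j k l)"
proof -
  have "(\<Sum>j\<in>B. \<Sum>k\<in>C. \<Sum>l\<in>D. g j k l) = (\<Sum>k\<in>C. \<Sum>j\<in>B. \<Sum>l\<in>D. g j k l)"
    by (rule sum.swap)
  also have "\<dots> = (\<Sum>k\<in>C. \<Sum>l\<in>D. \<Sum>j\<in>B. g j k l)"
    by (rule sum.cong[OF refl], rule sum.swap)
  finally show ?thesis .
qed

lemma sw4: "(\<Sum>i\<in>A. \<Sum>j\<in>B. \<Sum>k\<in>C. \<Sum>l\<in>D. f i j k l) = (\<Sum>k\<in>C. \<Sum>l\<in>D. \<Sum>i\<in>A. \<Sum>j\<in>B. f i j k l)"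
proof -
  have "(\<Sum>i\<in>A. \<Sum>j\<in>B. \<Sum>k\<in>C. \<Sum>l\<in>D. f i j k l) = (\<Sum>i\<in>A. \<Sum>k\<in>C. \<Sum>l\<in>D. \<Sum>j\<in>B. f i j k l)"
    by (rule sum.cong[OF refl], rule sw3)
  also have "\<dots> = (\<Sum>k\<in>C. \<Sum>l\<in>D. \<Sum>i\<in>A. \<Sum>j\<in>B. f i j k l)"
    by (rule sw3)
  finally show ?thesis .
qed

lemma frob_had_sq: "(frob_norm (A \<circ>\<^sub>H B))\<^sup>2 = (\<Sum>i\<in>UNIV. \<Sum>j\<in>UNIV. (cmod (A $ i $ j))\<^sup>2 * (cmod (B $ i $ j))\<^sup>2)"
  by (simp add: frob_norm_def hadamard_def norm_mult power_mult_distrib sum_nonneg)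

lemma expand:
  assumes "B = (\<Sum>k<(K::nat). outer (w k))"
  shows "of_real ((frob_norm (A \<circ>\<^sub>H B))\<^sup>2) = (\<Sum>k<K. \<Sum>l<K. Q A (zz w k l))"
proof -
  have "of_real ((frob_norm (A \<circ>\<^sub>H B))\<^sup>2)
     = (\<Sum>i\<in>UNIV. \<Sum>j\<in>UNIV. of_real ((cmod (A $ i $ j))\<^sup>2) * (of_real ((cmod (B $ i $ j))\<^sup>2) :: complex))"
    unfolding frob_had_sq by (simp only: of_real_sum of_real_mult)
  also have "\<dots> = (\<Sum>i\<in>UNIV. \<Sum>j\<in>UNIV. of_real ((cmod (A $ i $ j))\<^sup>2) *
       (\<Sum>k<K. \<Sum>l<K. zz w k l $ i * cnj (zz w k l $ j)))"
    by (simp only: ptwise[OF assms])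
  also have "\<dots> = (\<Sum>i\<in>UNIV. \<Sum>j\<in>UNIV. \<Sum>k<K. \<Sum>l<K. of_real ((cmod (A $ i $ j))\<^sup>2) *
       (zz w k l $ i * cnj (zz w k l $ j)))"
    by (simp only: sum_distrib_left)
  also have "\<dots> = (\<Sum>k<K. \<Sum>l<K. \<Sum>i\<in>UNIV. \<Sum>j\<in>UNIV. of_real ((cmod (A $ i $ j))\<^sup>2) *
       (zz w k l $ i * cnj (zz w k l $ j)))"
    by (rule sw4)
  also have "\<dots> = (\<Sum>k<K. \<Sum>l<K. Q A (zz w k l))"
    by (simp only: Q_def)
  finally show ?thesis .
qed

lemma Qform:
  assumes "A = (\<Sum>p<(P::nat). outer (u p))"
  shows "Q A z = (\<Sum>p<P. \<Sum>q<P. of_real ((cmod (\<Sum>i\<in>UNIV. zz u p q $ i * z $ i))\<^sup>2))"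
proof -
  have "Q A z = (\<Sum>i\<in>UNIV. \<Sum>j\<in>UNIV. (\<Sum>p<P. \<Sum>q<P. zz u p q $ i * cnj (zz u p q $ j)) * (z $ i * cnj (z $ j)))"
    unfolding Q_def by (simp only: ptwise[OF assms])
  also have "\<dots> = (\<Sum>i\<in>UNIV. \<Sum>j\<in>UNIV. \<Sum>p<P. \<Sum>q<P. (zz u p q $ i * cnj (zz u p q $ j)) * (z $ i * cnj (z $ j)))"
    by (simp only: sum_distrib_right)
  also have "\<dots> = (\<Sum>i\<in>UNIV. \<Sum>j\<in>UNIV. \<Sum>p<P. \<Sum>q<P. (zz u p q $ i * z $ i) * cnj (zz u p q $ j * z $ j))"
    by (simp only: complex_cnj_mult mult_ac)
  also have "\<dots> = (\<Sum>p<P. \<Sum>q<P. \<Sum>i\<in>UNIV. \<Sum>j\<in>UNIV. (zz u p q $ i * z $ i) * cnj (zz u p q $ j * z $ j))"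
    by (rule sw4)
  also have "\<dots> = (\<Sum>p<P. \<Sum>q<P. (\<Sum>i\<in>UNIV. zz u p q $ i * z $ i) * cnj (\<Sum>j\<in>UNIV. zz u p q $ j * z $ j))"
    by (simp only: sum_product cnj_sum)
  also have "\<dots> = (\<Sum>p<P. \<Sum>q<P. of_real ((cmod (\<Sum>i\<in>UNIV. zz u p q $ i * z $ i))\<^sup>2))"
    by (simp only: complex_norm_square)
  finally show ?thesis .
qed

lemma Q_nonneg:
  assumes "psd A"
  shows "0 \<le> Re (Q A z)"
proof -
  obtain P :: nat and u where "A = (\<Sum>p<P. outer (u p))" using spectral[OF assms] by blast
  then show ?thesis by (simp add: Qform sum_nonneg)
qed


lemma frob_outer_scale:
  "(frob_norm (A \<circ>\<^sub>H outer (c *s u)))\<^sup>2 = (cmod c)^4 * (frob_norm (A \<circ>\<^sub>H outer u))\<^sup>2"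
proof -
  have pt: "(cmod (A$i$j))\<^sup>2 * (cmod ((outer (c *s u))$i$j))\<^sup>2
      = (cmod c)^4 * ((cmod (A$i$j))\<^sup>2 * (cmod ((outer u)$i$j))\<^sup>2)" for i j
    by (simp add: outer_def norm_mult power_mult_distrib power4_eq_xxxx power2_eq_square mult_ac)
  show ?thesis by (simp only: frob_had_sq sum_distrib_left pt)
qed

lemma outer_lower:
  assumes m: "\<forall>u. nsq u = 1 \<longrightarrow> m \<le> frob_norm (A \<circ>\<^sub>H outer u)" and m0: "0 \<le> m"
  shows "m\<^sup>2 * (nsq w)\<^sup>2 \<le> (frob_norm (A \<circ>\<^sub>H outer w))\<^sup>2"
proof (cases "w = 0")
  case True
  then show ?thesis by (simp add: nsq_def)
next
  case False
  define c where "c = norm w"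
  have c0: "c > 0" using False c_def by simp
  have nz: "nsq w = c^2" using norm_nsq c_def by metis
  define u where "u = of_real (1/c) *s w"
  have "nsq u = (1/c)^2 * c^2" unfolding u_def nsq_scale nz using c0 by (simp add: norm_divide)
  then have u1: "nsq u = 1" using c0 by (simp add: power_divide)
  have wu: "w = of_real c *s u" unfolding u_def using c0 by (simp add: vec_eq_iff)
  have "m \<le> frob_norm (A \<circ>\<^sub>H outer u)" using m u1 by blast
  then have "m\<^sup>2 \<le> (frob_norm (A \<circ>\<^sub>H outer u))\<^sup>2" using m0 by (simp add: power_mono)
  then have "c^4 * m\<^sup>2 \<le> c^4 * (frob_norm (A \<circ>\<^sub>H outer u))\<^sup>2" using c0 by simp
  also have "\<dots> = (frob_norm (A \<circ>\<^sub>H outer w))\<^sup>2"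
    unfolding wu frob_outer_scale using c0 by simp
  moreover have "(c^2)^2 = c^4" by (simp add: power4_eq_xxxx power2_eq_square mult_ac)
  ultimately show ?thesis unfolding nz by (simp add: mult.commute)
qed

definition Jm :: "complex^'n^'n" where "Jm = (\<chi> i j. 1)"

lemma frob_Jm: "frob_norm (Jm \<circ>\<^sub>H B) = frob_norm B"
  by (simp add: Jm_def hadamard_def frob_norm_def)

lemma Q_Jm: "Q Jm z = (\<Sum>i\<in>UNIV. z $ i) * cnj (\<Sum>j\<in>UNIV. z $ j)"
  by (simp add: Q_def Jm_def sum_product cnj_sum)

lemma frob_decomp:
  assumes "B = (\<Sum>k<(K::nat). outer (w k))" "\<forall>k<K. \<forall>l<K. k \<noteq> l \<longrightarrow> ip (w k) (w l) = 0"
  shows "(frob_norm B)\<^sup>2 = (\<Sum>k<K. (nsq (w k))\<^sup>2)"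
proof -
  have qq: "Q Jm (zz w k l) = (if k = l then of_real ((nsq (w k))\<^sup>2) else 0)" if "k < K" "l < K" for k l
  proof -
    have s: "(\<Sum>i\<in>UNIV. zz w k l $ i) = ip (w l) (w k)"
      by (simp add: zz_def ip_def mult.commute)
    show ?thesis
    proof (cases "k = l")
      case True
      then show ?thesis unfolding Q_Jm s by (simp add: ip_self power2_eq_square)
    next
      case False
      then show ?thesis unfolding Q_Jm s using assms(2) that by simp
    qed
  qed
  have "(\<Sum>k<K. \<Sum>l<K. Q Jm (zz w k l)) = (\<Sum>k<K. \<Sum>l<K. (if k = l then of_real ((nsq (w k))\<^sup>2) else 0))"
    by (rule sum.cong[OF refl], rule sum.cong[OF refl], rule qq) auto
  also have "\<dots> = (\<Sum>k<K. of_real ((nsq (w k))\<^sup>2))"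
    by (simp add: sum.delta)
  finally have "(of_real ((frob_norm B)\<^sup>2) :: complex) = of_real (\<Sum>k<K. (nsq (w k))\<^sup>2)"
    unfolding expand[OF assms(1), of Jm, unfolded frob_Jm] by (simp add: of_real_sum)
  then show ?thesis using of_real_eq_iff by blast
qed

lemma main_ineq:
  assumes A: "psd A" and B: "psd B"
    and m: "\<forall>u. nsq u = 1 \<longrightarrow> m \<le> frob_norm (A \<circ>\<^sub>H outer u)" and m0: "0 \<le> m"
  shows "m\<^sup>2 * (frob_norm B)\<^sup>2 \<le> (frob_norm (A \<circ>\<^sub>H B))\<^sup>2"
proof -
  obtain K :: nat and w where Bw: "B = (\<Sum>k<K. outer (w k))"
    and o: "\<forall>k<K. \<forall>l<K. k \<noteq> l \<longrightarrow> ip (w k) (w l) = 0"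
    using spectral[OF B] by blast
  have diag: "(frob_norm (A \<circ>\<^sub>H outer (w k)))\<^sup>2 = Re (Q A (zz w k k))" for k
  proof -
    have e: "outer (w k) = (\<Sum>k'<(1::nat). outer ((\<lambda>_. w k) k'))" by simp
    have "zz (\<lambda>_. w k) 0 0 = zz w k k" by (simp add: zz_def)
    then have "(of_real ((frob_norm (A \<circ>\<^sub>H outer (w k)))\<^sup>2) :: complex) = Q A (zz w k k)"
      using expand[OF e, of A] by simp
    then show ?thesis by (metis Re_complex_of_real)
  qed
  have "m\<^sup>2 * (frob_norm B)\<^sup>2 = (\<Sum>k<K. m\<^sup>2 * (nsq (w k))\<^sup>2)"
    unfolding frob_decomp[OF Bw o] by (simp add: sum_distrib_left)
  also have "\<dots> \<le> (\<Sum>k<K. Re (Q A (zz w k k)))"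
    by (intro sum_mono) (simp add: diag[symmetric] outer_lower[OF m m0])
  also have "\<dots> \<le> (\<Sum>k<K. \<Sum>l<K. Re (Q A (zz w k l)))"
  proof (intro sum_mono)
    fix k assume "k \<in> {..<K}"
    then show "Re (Q A (zz w k k)) \<le> (\<Sum>l<K. Re (Q A (zz w k l)))"
      using member_le_sum[of k "{..<K}" "\<lambda>l. Re (Q A (zz w k l))"] Q_nonneg[OF A] by simp
  qed
  also have "\<dots> = Re (\<Sum>k<K. \<Sum>l<K. Q A (zz w k l))" by (simp add: Re_sum)
  also have "\<dots> = (frob_norm (A \<circ>\<^sub>H B))\<^sup>2" unfolding expand[OF Bw, of A, symmetric] by simp
  finally show ?thesis .
qed

lemma frob_outer: "frob_norm (outer x) = nsq x"
proof -
  have "(frob_norm (outer x))\<^sup>2 = (\<Sum>i\<in>UNIV. \<Sum>j\<in>UNIV. (cmod (x $ i))\<^sup>2 * (cmod (x $ j))\<^sup>2)"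
    by (simp add: frob_norm_def outer_def norm_mult power_mult_distrib sum_nonneg)
  also have "\<dots> = (nsq x)\<^sup>2" by (simp add: nsq_def power2_eq_square sum_product)
  finally have sq: "(frob_norm (outer x))\<^sup>2 = (nsq x)\<^sup>2" .
  have f0: "0 \<le> frob_norm (outer x)" by (simp add: frob_norm_def sum_nonneg)
  show ?thesis using power2_eq_iff_nonneg[OF f0 nsq_nonneg[of x]] sq by simp
qed

theorem proposition3p1:
  fixes A :: "complex^'n^'n"
  assumes "psd A"
  shows "\<exists>x::complex^'n. norm x = 1 \<and> I2 A = frob_norm (A \<circ>\<^sub>H outer x) \<and>
           (\<forall>y::complex^'n. norm y = 1 \<longrightarrow> I2 A \<le> frob_norm (A \<circ>\<^sub>H outer y))"
proof -
  define g where "g = (\<lambda>x::complex^'n. frob_norm (A \<circ>\<^sub>H outer x))"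
  have g_eq: "g = (\<lambda>x. sqrt (\<Sum>i\<in>UNIV. \<Sum>j\<in>UNIV. (cmod (A $ i $ j * (x $ i * cnj (x $ j))))\<^sup>2))"
    by (simp add: g_def frob_norm_def hadamard_def outer_def)
  have cont: "continuous_on UNIV g"
    unfolding g_eq by (intro continuous_intros)
  have ne: "sphere (0::complex^'n) 1 \<noteq> {}" by simp
  obtain x0 where x0: "x0 \<in> sphere 0 1" and mn: "\<forall>y\<in>sphere 0 1. g x0 \<le> g y"
    using continuous_attains_inf[OF compact_sphere ne continuous_on_subset[OF cont]] by blast
  have nx0: "norm x0 = 1" using x0 by simp
  have mu: "\<forall>u. nsq u = 1 \<longrightarrow> g x0 \<le> frob_norm (A \<circ>\<^sub>H outer u)"
    using mn unfolding g_def by (simp add: norm1_nsq)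
  have m0: "0 \<le> g x0" by (simp add: g_def frob_norm_def sum_nonneg)
  define T where "T = {frob_norm (A \<circ>\<^sub>H B) | B. psd B \<and> frob_norm B = 1}"
  have f1: "frob_norm (outer x0) = 1" using frob_outer[of x0] nx0 by (simp add: norm1_nsq)
  have inT: "g x0 \<in> T"
    unfolding T_def g_def using psd_outer[of x0] f1 by blast
  have low: "g x0 \<le> t" if "t \<in> T" for t
  proof -
    obtain B where t: "t = frob_norm (A \<circ>\<^sub>H B)" "psd B" "frob_norm B = 1" using \<open>t \<in> T\<close> T_def by blast
    have "(g x0)\<^sup>2 * (frob_norm B)\<^sup>2 \<le> t\<^sup>2" using main_ineq[OF assms t(2) mu m0] t(1) by simp
    then have "(g x0)\<^sup>2 \<le> t\<^sup>2" using t(3) by simp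
    moreover have "0 \<le> t" using t(1) by (simp add: frob_norm_def sum_nonneg)
    ultimately show ?thesis using power2_le_imp_le by blast
  qed
  have I: "I2 A = g x0"
    unfolding I2_def T_def[symmetric] by (rule cInf_eq_minimum[OF inT low])
  show ?thesis
  proof (intro exI conjI allI impI)
    show "norm x0 = 1" by fact
    show "I2 A = frob_norm (A \<circ>\<^sub>H outer x0)" using I g_def by simp
    fix y :: "complex^'n" assume "norm y = 1"
    then show "I2 A \<le> frob_norm (A \<circ>\<^sub>H outer y)" using I mn g_def by simp
  qed
qed

end
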